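(* If $k \geq 9$ and $|q - q_k| < q_k^{-2k-6}$, then $d_{\mathrm{H}}\big(g_{q,k}(\pi_q(A_q)),\ g_{q_k,k}(\pi_{q_k}(A_{q_k}))\big) < q_k^{-2k-4}$.
   Context: $q_k$ is the unique root in $(1,2)$ of $x^k - x^{k-1} - \cdots - x - 1 = 0$. $\pi_q((\epsilon_j)_{j\ge1}) = \sum_{j\ge1}\epsilon_j q^{-j}$ (for sequences over $\{-1,0,1\}$). $g_{q,k}(x) = q^{-k}x + \sum_{j=1}^{k-1}q^{-j}$. $d_{\mathrm{H}}$ is the Hausdorff distance. $W_2 = \{(-1\,0),(0\,{-1}),(00),(01),(10)\}$ and $1^k0^{k+4}W_2^\mathbb{N}$ is the set of sequences over $\{-1,0,1\}$ starting with $k$ ones then $k+4$ zeros whose tail is an infinite concatenation of words from $W_2$. Construction of $A_p$ from a fixed expansion of 1: given $(c_j) \in \{-1,0,1\}^\mathbb{N}$ with $\pi_p((c_j)) = 1$, let $J = \{j : c_j = 0\}$ enumerated $j_0<j_1<\cdots$, $J_{\mathrm{fixed},1} = \{j_n : n=4m+1, m\ge0\}$, $J_{\mathrm{fixed},0} = \{j_n : n = 4m+3, m\ge0\}$; $A_p$ is the set of $(a_j) \in \{0,1\}^\mathbb{N}$ with $a_j = 1$ if $c_j = 1$, $a_j = 0$ if $c_j = -1$, $a_j = 1$ if $j\in J_{\mathrm{fixed},1}$, $a_j = 0$ if $j \in J_{\mathrm{fixed},0}$. Here $A_{q_k}$ is built from $(c_j) = 1^k0^\infty$, and $A_q$ is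 built from an arbitrarily chosen sequence $(c_j) \in 1^k0^{k+4}W_2^\mathbb{N}$ with $\pi_q((c_j)) = 1$ (such a sequence exists for these $k,q$). *)

theory Defs
  imports "HOL-Analysis.Analysis"
begin

definition qk :: "nat \<Rightarrow> real" where
  "qk k = (THE x. 1 < x \<and> x < 2 \<and> x ^ k - (\<Sum>i<k. x ^ i) = 0)"

text \<open>Sequences are 0-indexed: c j stands for the paper's epsilon_(j+1).
  pi_q(eps) = sum_(j>=1) eps_j q^(-j) = sum_(j>=0) c j q^(-(j+1)).\<close>
definition pi_q :: "real \<Rightarrow> (nat \<Rightarrow> int) \<Rightarrow> real" where
  "pi_q q c = (\<Sum>j. real_of_int (c j) / q ^ (Suc j))"

definition g_qk :: "real \<Rightarrow> nat \<Rightarrow> real \<Rightarrow> real" where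
  "g_qk q k x = x / q ^ k + (\<Sum>j\<in>{1..<k}. 1 / q ^ j)"

definition hausdorff_dist :: "'a::metric_space set \<Rightarrow> 'a set \<Rightarrow> real" where
  "hausdorff_dist A B = max (SUP a\<in>A. infdist a B) (SUP b\<in>B. infdist b A)"

definition W2 :: "(int \<times> int) set" where
  "W2 = {(-1, 0), (0, -1), (0, 0), (0, 1), (1, 0)}"

text \<open>1^k 0^(k+4) W_2^N (0-indexed positions).\<close>
definition seqs_W2 :: "nat \<Rightarrow> (nat \<Rightarrow> int) set" where
  "seqs_W2 k = {c. (\<forall>j<k. c j = 1) \<and> (\<forall>j. k \<le> j \<and> j < 2 * k + 4 \<longrightarrow> c j = 0)
      \<and> (\<forall>m. (c (2 * k + 4 + 2 * m), c (2 * k + 4 + 2 * m + 1)) \<in> W2)}"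

definition ones_then_zeros :: "nat \<Rightarrow> nat \<Rightarrow> int" where
  "ones_then_zeros k j = (if j < k then 1 else 0)"

text \<open>J = zero positions; the position j = j_n has index n = #{i in J. i < j}.\<close>
definition zero_index :: "(nat \<Rightarrow> int) \<Rightarrow> nat \<Rightarrow> nat" where
  "zero_index c j = card {i. i < j \<and> c i = 0}"

definition J_fixed1 :: "(nat \<Rightarrow> int) \<Rightarrow> nat set" where
  "J_fixed1 c = {j. c j = 0 \<and> zero_index c j mod 4 = 1}"

definition J_fixed0 :: "(nat \<Rightarrow> int) \<Rightarrow> nat set" where
  "J_fixed0 c = {j. c j = 0 \<and> zero_index c j mod 4 = 3}"

definition A_set :: "(nat \<Rightarrow> int) \<Rightarrow> (nat \<Rightarrow> int) set" where
  "A_set c = {a. (\<forall>j. a j \<in> {0, 1})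
      \<and> (\<forall>j. c j = 1 \<longrightarrow> a j = 1)
      \<and> (\<forall>j. c j = -1 \<longrightarrow> a j = 0)
      \<and> (\<forall>j\<in>J_fixed1 c. a j = 1)
      \<and> (\<forall>j\<in>J_fixed0 c. a j = 0)}"

end

theory Submission imports Defs begin

lemma sum_inv_pow_strict:
  fixes x y :: real
  assumes "1 < x" "x < y" "k \<ge> 1"
  shows "(\<Sum>i<k. 1 / y ^ (k - i)) < (\<Sum>i<k. 1 / x ^ (k - i))"
proof (rule sum_strict_mono)
  show "finite {..<k}" by simp
  have "0 \<in> {..<k}" using assms by simp
  then show "{..<k} \<noteq> {}" by blast
  fix i assume "i \<in> {..<k}"
  then have "k - i \<noteq> 0" by auto
  then have "x ^ (k - i) < y ^ (k - i)" using assms by (intro power_strict_mono) auto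
  then show "1 / y ^ (k - i) < 1 / x ^ (k - i)" using assms
    by (intro divide_strict_left_mono) auto
qed

lemma root_iff:
  fixes x :: real
  assumes "1 < x"
  shows "x ^ k - (\<Sum>i<k. x ^ i) = 0 \<longleftrightarrow> (\<Sum>i<k. 1 / x ^ (k - i)) = 1"
proof -
  have xk: "x ^ k > 0" using assms by simp
  have "(\<Sum>i<k. 1 / x ^ (k - i)) = (\<Sum>i<k. x ^ i / x ^ k)"
  proof (rule sum.cong)
    fix i assume "i \<in> {..<k}"
    then have "x ^ k = x ^ i * x ^ (k - i)" by (simp add: power_add[symmetric])
    then show "1 / x ^ (k - i) = x ^ i / x ^ k" using assms by (simp add: field_simps)
  qed simp
  also have "\<dots> = (\<Sum>i<k. x ^ i) / x ^ k" by (simp add: sum_divide_distrib)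
  finally have "(\<Sum>i<k. 1 / x ^ (k - i)) = (\<Sum>i<k. x ^ i) / x ^ k" .
  moreover have ne: "x ^ k \<noteq> 0" using xk by linarith
  ultimately show ?thesis using nonzero_divide_eq_eq[OF ne, of "\<Sum>i<k. x ^ i" 1] by auto
qed

lemma qk_bounds:
  assumes "k \<ge> 9"
  shows "1.99 \<le> qk k \<and> qk k < 2"
proof -
  define f where "f = (\<lambda>x::real. x ^ k - (\<Sum>i<k. x ^ i))"
  have fgeo: "f x * (x - 1) = x ^ k * (x - 2) + 1" if "x > 1" for x
  proof -
    have "(\<Sum>i<k. x ^ i) = (x ^ k - 1) / (x - 1)" using that by (intro geometric_sum) auto
    then show ?thesis using that unfolding f_def by (simp add: field_simps)
  qed
  have p9: "(1.99::real) ^ 9 \<le> 1.99 ^ k" using assms by (intro power_increasing) auto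
  have "(100::real) < 1.99 ^ 9" by (simp add: power_divide)
  then have "100 < (1.99::real) ^ k" using p9 by linarith
  then have "(1.99::real) ^ k * (1.99 - 2) + 1 < 0" by simp
  then have "f 1.99 * (1.99 - 1) < 0" using fgeo[of "1.99"] by simp
  then have f1: "f 1.99 \<le> 0" by (simp add: mult_less_0_iff)
  have f2: "f 2 = 1" using fgeo[of 2] by simp
  have "continuous_on {1.99..2} f" unfolding f_def by (intro continuous_intros)
  then obtain x0 where x0: "1.99 \<le> x0" "x0 \<le> 2" "f x0 = 0"
    using IVT'[of f "1.99" 0 2] f1 f2 by auto
  have "x0 \<noteq> 2" using x0 f2 by auto
  with x0 have x0b: "1 < x0" "x0 < 2" by auto
  have k1: "k \<ge> 1" using assms by simp
  have "qk k = x0"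
    unfolding qk_def
  proof (rule the_equality)
    show "1 < x0 \<and> x0 < 2 \<and> x0 ^ k - (\<Sum>i<k. x0 ^ i) = 0" using x0b x0 unfolding f_def by auto
  next
    fix y :: real assume y: "1 < y \<and> y < 2 \<and> y ^ k - (\<Sum>i<k. y ^ i) = 0"
    have ey: "(\<Sum>i<k. 1 / y ^ (k - i)) = 1" using y root_iff by blast
    have e0: "(\<Sum>i<k. 1 / x0 ^ (k - i)) = 1" using x0 x0b root_iff unfolding f_def by blast
    show "y = x0"
    proof (rule ccontr)
      assume "y \<noteq> x0"
      then consider "y < x0" | "x0 < y" by linarith
      then show False
      proof cases
        case 1 then show ?thesis using sum_inv_pow_strict[OF _ 1 k1] y ey e0 by auto
      next
        case 2 then show ?thesis using sum_inv_pow_strict[OF _ 2 k1] x0b ey e0 by auto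
      qed
    qed
  qed
  then show ?thesis using x0 x0b by simp
qed


lemma pi_decomp:
  fixes x :: real and a :: "nat \<Rightarrow> int"
  assumes x1: "1 < x" and a01: "\<forall>j. a j \<in> {0, 1}"
  shows "\<exists>T. pi_q x a = (\<Sum>j<N. real_of_int (a j) / x ^ Suc j) + T \<and> 0 \<le> T \<and> T \<le> 1 / (x ^ N * (x - 1))"
proof -
  define f where "f j = real_of_int (a j) / x ^ Suc j" for j
  have xp: "x > 0" using x1 by simp
  have f0: "0 \<le> f j" for j using a01[rule_format, of j] xp unfolding f_def by auto
  have fle: "f j \<le> (1 / x) ^ Suc j" for j
    using a01[rule_format, of j] xp unfolding f_def by (auto simp: power_one_over)
  have ux: "norm (1 / x) < 1" using x1 by simp
  have sg0: "summable (\<lambda>j. (1 / x) ^ j)" using ux by (rule summable_geometric)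
  have sg: "summable (\<lambda>j. (1 / x) ^ Suc j)"
    using summable_ignore_initial_segment[OF sg0, of 1] by simp
  have sf: "summable f"
    by (rule summable_comparison_test'[OF sg]) (use f0 fle in auto)
  define T where "T = (\<Sum>n. f (n + N))"
  have sfN: "summable (\<lambda>n. f (n + N))" using summable_ignore_initial_segment[OF sf] .
  have sgN: "summable (\<lambda>n. (1 / x) ^ Suc (n + N))" using summable_ignore_initial_segment[OF sg] .
  have T0: "0 \<le> T" unfolding T_def using sfN f0 by (intro suminf_nonneg) auto
  have "T \<le> (\<Sum>n. (1 / x) ^ Suc (n + N))" unfolding T_def
    using sfN sgN fle by (intro suminf_le) auto
  also have "(\<lambda>n. (1 / x) ^ Suc (n + N)) = (\<lambda>n. (1 / x) ^ Suc N * (1 / x) ^ n)"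
  proof (rule ext)
    fix n
    have "Suc (n + N) = Suc N + n" by simp
    then show "(1 / x) ^ Suc (n + N) = (1 / x) ^ Suc N * (1 / x) ^ n" by (simp only: power_add)
  qed
  also have "(\<Sum>n. (1 / x) ^ Suc N * (1 / x) ^ n) = (1 / x) ^ Suc N * (1 / (1 - 1 / x))"
    using suminf_mult[OF sg0, of "(1 / x) ^ Suc N"] suminf_geometric[OF ux] by simp
  also have "\<dots> = 1 / (x ^ N * (x - 1))" using x1 by (simp add: field_simps power_one_over)
  finally have T1: "T \<le> 1 / (x ^ N * (x - 1))" .
  have "pi_q x a = T + (\<Sum>j<N. f j)" unfolding pi_q_def T_def
    using suminf_split_initial_segment[OF sf, of N] unfolding f_def by simp
  then show ?thesis using T0 T1 unfolding f_def by (intro exI[of _ T]) auto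
qed

lemma pow_diff_le:
  fixes u v s :: real
  assumes "0 \<le> u" "0 \<le> v" "u \<le> s" "v \<le> s"
  shows "\<bar>u ^ Suc m - v ^ Suc m\<bar> \<le> real (Suc m) * s ^ m * \<bar>u - v\<bar>"
proof (induction m)
  case 0 then show ?case by simp
next
  case (Suc m)
  have s0: "0 \<le> s" using assms by simp
  have eq: "u ^ Suc (Suc m) - v ^ Suc (Suc m) = u * (u ^ Suc m - v ^ Suc m) + (u - v) * v ^ Suc m"
    by (simp add: algebra_simps)
  have a: "\<bar>u * (u ^ Suc m - v ^ Suc m)\<bar> \<le> s * (real (Suc m) * s ^ m * \<bar>u - v\<bar>)"
    unfolding abs_mult using Suc assms by (intro mult_mono) auto
  have b: "\<bar>(u - v) * v ^ Suc m\<bar> \<le> \<bar>u - v\<bar> * s ^ Suc m"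
  proof -
    have "v ^ Suc m \<le> s ^ Suc m" by (rule power_mono) (use assms in auto)
    then show ?thesis unfolding abs_mult using assms by (intro mult_left_mono) auto
  qed
  have "\<bar>u ^ Suc (Suc m) - v ^ Suc (Suc m)\<bar> \<le> s * (real (Suc m) * s ^ m * \<bar>u - v\<bar>) + \<bar>u - v\<bar> * s ^ Suc m"
    unfolding eq using a b abs_triangle_ineq[of "u * (u ^ Suc m - v ^ Suc m)" "(u - v) * v ^ Suc m"] by linarith
  also have "\<dots> = real (Suc (Suc m)) * s ^ Suc m * \<bar>u - v\<bar>" by (simp add: algebra_simps)
  finally show ?case .
qed

lemma sum_deriv_geo:
  fixes s :: real
  assumes "0 \<le> s" "s < 1"
  shows "(\<Sum>m<M. real (Suc m) * s ^ m) \<le> 1 / (1 - s)^2"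
proof -
  have eq: "(1 - s)^2 * (\<Sum>m<M. real (Suc m) * s ^ m) = 1 - real (Suc M) * s ^ M + real M * s ^ Suc M"
    by (induction M) (simp_all add: algebra_simps power2_eq_square)
  have "real M * s ^ Suc M \<le> real (Suc M) * s ^ M"
  proof -
    have "s ^ Suc M \<le> s ^ M" using assms by (simp add: mult_left_le_one_le)
    then show ?thesis using assms by (intro mult_mono) auto
  qed
  then have "(1 - s)^2 * (\<Sum>m<M. real (Suc m) * s ^ m) \<le> 1" using eq by simp
  moreover have "(1 - s)^2 > 0" using assms by simp
  ultimately show ?thesis by (simp add: field_simps)
qed

lemma sum_pow_diff_bound:
  fixes e :: "'i \<Rightarrow> real" and h :: "'i \<Rightarrow> nat" and u v s :: real
  assumes J: "finite J" "inj_on h J" and e: "\<forall>j\<in>J. \<bar>e j\<bar> \<le> 1"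
    and uv: "0 \<le> u" "0 \<le> v" "u \<le> s" "v \<le> s" "s < 1"
  shows "\<bar>\<Sum>j\<in>J. e j * (u ^ Suc (h j) - v ^ Suc (h j))\<bar> \<le> \<bar>u - v\<bar> / (1 - s)^2"
proof -
  have s0: "0 \<le> s" using uv by simp
  have "\<bar>\<Sum>j\<in>J. e j * (u ^ Suc (h j) - v ^ Suc (h j))\<bar> \<le> (\<Sum>j\<in>J. \<bar>e j * (u ^ Suc (h j) - v ^ Suc (h j))\<bar>)"
    by (rule sum_abs)
  also have "\<dots> \<le> (\<Sum>j\<in>J. \<bar>u - v\<bar> * (real (Suc (h j)) * s ^ h j))"
  proof (rule sum_mono)
    fix j assume j: "j \<in> J"
    have "\<bar>e j * (u ^ Suc (h j) - v ^ Suc (h j))\<bar> \<le> 1 * \<bar>u ^ Suc (h j) - v ^ Suc (h j)\<bar>"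
      unfolding abs_mult using e j by (intro mult_right_mono) auto
    also have "\<dots> \<le> real (Suc (h j)) * s ^ h j * \<bar>u - v\<bar>" using pow_diff_le[OF uv(1-4)] by simp
    finally show "\<bar>e j * (u ^ Suc (h j) - v ^ Suc (h j))\<bar> \<le> \<bar>u - v\<bar> * (real (Suc (h j)) * s ^ h j)"
      by (simp add: algebra_simps)
  qed
  also have "\<dots> = \<bar>u - v\<bar> * (\<Sum>m\<in>h ` J. real (Suc m) * s ^ m)"
    by (simp add: sum_distrib_left sum.reindex[OF J(2)])
  also have "\<dots> \<le> \<bar>u - v\<bar> * (1 / (1 - s)^2)"
  proof (rule mult_left_mono)
    obtain M where M: "h ` J \<subseteq> {..<M}" using finite_nat_bounded[of "h ` J"] J by auto
    have "(\<Sum>m\<in>h ` J. real (Suc m) * s ^ m) \<le> (\<Sum>m<M. real (Suc m) * s ^ m)"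
      using M s0 by (intro sum_mono2) auto
    also have "\<dots> \<le> 1 / (1 - s)^2" using sum_deriv_geo s0 uv by blast
    finally show "(\<Sum>m\<in>h ` J. real (Suc m) * s ^ m) \<le> 1 / (1 - s)^2" .
  qed simp
  finally show ?thesis by simp
qed


lemma core:
  fixes x y r d :: real and a b :: "nat \<Rightarrow> int"
  assumes r1: "1 < r" and rx: "r \<le> x" and ry: "r \<le> y" and xy: "\<bar>x - y\<bar> \<le> d"
    and a01: "\<forall>j. a j \<in> {0, 1}" and b01: "\<forall>j. b j \<in> {0, 1}" and ab: "\<forall>j<N. a j = b j"
  shows "\<bar>g_qk x k (pi_q x a) - g_qk y k (pi_q y b)\<bar> \<le> 2 * d / (r - 1)^2 + 1 / (r ^ (N + k) * (r - 1))"
proof -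
  have x1: "1 < x" and y1: "1 < y" using r1 rx ry by auto
  obtain Tx where Tx: "pi_q x a = (\<Sum>j<N. real_of_int (a j) / x ^ Suc j) + Tx" "0 \<le> Tx" "Tx \<le> 1 / (x ^ N * (x - 1))"
    using pi_decomp[OF x1 a01] by blast
  obtain Ty where Ty0: "pi_q y b = (\<Sum>j<N. real_of_int (b j) / y ^ Suc j) + Ty" "0 \<le> Ty" "Ty \<le> 1 / (y ^ N * (y - 1))"
    using pi_decomp[OF y1 b01] by blast
  have "(\<Sum>j<N. real_of_int (b j) / y ^ Suc j) = (\<Sum>j<N. real_of_int (a j) / y ^ Suc j)"
    using ab by (intro sum.cong) auto
  with Ty0 have Ty: "pi_q y b = (\<Sum>j<N. real_of_int (a j) / y ^ Suc j) + Ty" by simp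
  have gform: "g_qk z k ((\<Sum>j<N. real_of_int (a j) / z ^ Suc j) + T) =
      (\<Sum>j<N. real_of_int (a j) * (1 / z) ^ Suc (k + j)) + (\<Sum>j\<in>{1..<k}. (1 / z) ^ Suc (j - 1)) + T / z ^ k"
    if z: "z > 1" for z T
  proof -
    have "(\<Sum>j<N. real_of_int (a j) / z ^ Suc j) / z ^ k = (\<Sum>j<N. real_of_int (a j) / z ^ Suc j / z ^ k)"
      by (simp add: sum_divide_distrib)
    also have "\<dots> = (\<Sum>j<N. real_of_int (a j) * (1 / z) ^ Suc (k + j))"
    proof (rule sum.cong)
      fix j
      have "z ^ Suc (k + j) = z ^ Suc j * z ^ k" by (simp add: power_add)
      then show "real_of_int (a j) / z ^ Suc j / z ^ k = real_of_int (a j) * (1 / z) ^ Suc (k + j)"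
        by (simp add: power_one_over) (metis add.commute power_add)
    qed simp
    finally have e1: "(\<Sum>j<N. real_of_int (a j) / z ^ Suc j) / z ^ k = (\<Sum>j<N. real_of_int (a j) * (1 / z) ^ Suc (k + j))" .
    have e2: "(\<Sum>j\<in>{1..<k}. 1 / z ^ j) = (\<Sum>j\<in>{1..<k}. (1 / z) ^ Suc (j - 1))"
      by (intro sum.cong) (auto simp: power_one_over)
    show ?thesis unfolding g_qk_def using e1 e2 by (simp add: add_divide_distrib)
  qed
  define u where "u = 1 / x"
  define v where "v = 1 / y"
  define s where "s = 1 / r"
  have uv: "0 \<le> u" "0 \<le> v" "u \<le> s" "v \<le> s" "s < 1"
    unfolding u_def v_def s_def using r1 rx ry by (auto simp: frac_le)
  have gx: "g_qk x k (pi_q x a) = (\<Sum>j<N. real_of_int (a j) * u ^ Suc (k + j)) + (\<Sum>j\<in>{1..<k}. u ^ Suc (j - 1)) + Tx / x ^ k"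
    unfolding Tx(1) u_def by (rule gform[OF x1])
  have gy: "g_qk y k (pi_q y b) = (\<Sum>j<N. real_of_int (a j) * v ^ Suc (k + j)) + (\<Sum>j\<in>{1..<k}. v ^ Suc (j - 1)) + Ty / y ^ k"
    unfolding Ty v_def by (rule gform[OF y1])
  have diff: "g_qk x k (pi_q x a) - g_qk y k (pi_q y b) =
      (\<Sum>j<N. real_of_int (a j) * (u ^ Suc (k + j) - v ^ Suc (k + j)))
    + (\<Sum>j\<in>{1..<k}. 1 * (u ^ Suc (j - 1) - v ^ Suc (j - 1))) + (Tx / x ^ k - Ty / y ^ k)"
    unfolding gx gy by (simp add: sum_subtractf algebra_simps)
  have B1: "\<bar>\<Sum>j<N. real_of_int (a j) * (u ^ Suc (k + j) - v ^ Suc (k + j))\<bar> \<le> \<bar>u - v\<bar> / (1 - s)^2"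
  proof (intro sum_pow_diff_bound[OF _ _ _ uv])
    show "\<forall>j\<in>{..<N}. \<bar>real_of_int (a j)\<bar> \<le> 1"
    proof
      fix j show "\<bar>real_of_int (a j)\<bar> \<le> 1" using a01[rule_format, of j] by auto
    qed
  qed (auto simp: inj_on_def)
  have B2: "\<bar>\<Sum>j\<in>{1..<k}. 1 * (u ^ Suc (j - 1) - v ^ Suc (j - 1))\<bar> \<le> \<bar>u - v\<bar> / (1 - s)^2"
    by (intro sum_pow_diff_bound[OF _ _ _ uv]) (auto simp: inj_on_def)
  have "\<bar>u - v\<bar> = \<bar>x - y\<bar> / (x * y)" unfolding u_def v_def using x1 y1
    by (simp add: field_simps abs_div abs_minus_commute)
  also have "\<dots> \<le> d / (r * r)"
    using xy r1 rx ry by (intro frac_le mult_mono) auto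
  finally have uvd: "\<bar>u - v\<bar> \<le> d / (r * r)" .
  have "\<bar>u - v\<bar> / (1 - s)^2 \<le> d / (r * r) / (1 - s)^2"
    using uvd uv by (intro divide_right_mono) auto
  also have "\<dots> = d / (r - 1)^2" unfolding s_def using r1
    by (simp add: field_simps power2_eq_square)
  finally have B12: "\<bar>u - v\<bar> / (1 - s)^2 \<le> d / (r - 1)^2" .
  have tailb: "0 \<le> T / z ^ k \<and> T / z ^ k \<le> 1 / (r ^ (N + k) * (r - 1))"
    if z: "r \<le> z" and T: "0 \<le> T" "T \<le> 1 / (z ^ N * (z - 1))" for z T
  proof -
    have z1: "1 < z" using z r1 by simp
    have "T / z ^ k \<le> 1 / (z ^ N * (z - 1)) / z ^ k"
      using T z1 by (intro divide_right_mono) auto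
    also have "\<dots> = 1 / (z ^ (N + k) * (z - 1))" by (simp add: power_add)
    also have "\<dots> \<le> 1 / (r ^ (N + k) * (r - 1))"
      using r1 z by (intro divide_left_mono mult_mono power_mono mult_pos_pos) auto
    finally show ?thesis using T z1 by simp
  qed
  have tx: "0 \<le> Tx / x ^ k \<and> Tx / x ^ k \<le> 1 / (r ^ (N + k) * (r - 1))" using tailb[OF rx Tx(2,3)] .
  have ty: "0 \<le> Ty / y ^ k \<and> Ty / y ^ k \<le> 1 / (r ^ (N + k) * (r - 1))" using tailb[OF ry Ty0(2,3)] .
  have B3: "\<bar>Tx / x ^ k - Ty / y ^ k\<bar> \<le> 1 / (r ^ (N + k) * (r - 1))" using tx ty by linarith
  have "\<bar>g_qk x k (pi_q x a) - g_qk y k (pi_q y b)\<bar> \<le> 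
      \<bar>\<Sum>j<N. real_of_int (a j) * (u ^ Suc (k + j) - v ^ Suc (k + j))\<bar>
    + \<bar>\<Sum>j\<in>{1..<k}. 1 * (u ^ Suc (j - 1) - v ^ Suc (j - 1))\<bar> + \<bar>Tx / x ^ k - Ty / y ^ k\<bar>"
    unfolding diff by linarith
  then show ?thesis using B1 B2 B12 B3 by linarith
qed

definition a0 :: "(nat \<Rightarrow> int) \<Rightarrow> nat \<Rightarrow> int" where
  "a0 c j = (if c j = 1 then 1 else if c j = -1 then 0 else if zero_index c j mod 4 = 1 then 1 else 0)"

lemma a0_in: "a0 c \<in> A_set c"
  unfolding A_set_def J_fixed1_def J_fixed0_def a0_def by auto

lemma zero_index_agree:
  assumes "\<forall>i<N. c1 i = c2 i" "j \<le> N"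
  shows "zero_index c1 j = zero_index c2 j"
proof -
  have "{i. i < j \<and> c1 i = 0} = {i. i < j \<and> c2 i = 0}" using assms by auto
  then show ?thesis unfolding zero_index_def by simp
qed

lemma splice_in:
  assumes a: "a \<in> A_set c1" and agree: "\<forall>i<N. c1 i = c2 i"
  shows "(\<lambda>j. if j < N then a j else a0 c2 j) \<in> A_set c2"
proof -
  have zi: "zero_index c1 j = zero_index c2 j" if "j < N" for j
    using zero_index_agree[OF agree] that by simp
  have a0: "a0 c2 \<in> A_set c2" by (rule a0_in)
  show ?thesis using a a0 agree zi unfolding A_set_def J_fixed1_def J_fixed0_def
    by (auto split: if_splits)
qed

lemma hd_le:
  fixes A B :: "real set"
  assumes "A \<noteq> {}" "B \<noteq> {}"
    and AB: "\<forall>a\<in>A. \<exists>b\<in>B. dist a b \<le> D" and BA: "\<forall>b\<in>B. \<exists>a\<in>A. dist b a \<le> D"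
  shows "hausdorff_dist A B \<le> D"
proof -
  have 1: "(SUP a\<in>A. infdist a B) \<le> D"
  proof (rule cSUP_least)
    fix a assume "a \<in> A"
    then obtain b where "b \<in> B" "dist a b \<le> D" using AB by blast
    then show "infdist a B \<le> D" using infdist_le[of b B a] by linarith
  qed (use assms in auto)
  have 2: "(SUP b\<in>B. infdist b A) \<le> D"
  proof (rule cSUP_least)
    fix b assume "b \<in> B"
    then obtain a where "a \<in> A" "dist b a \<le> D" using BA by blast
    then show "infdist b A \<le> D" using infdist_le[of a A b] by linarith
  qed (use assms in auto)
  show ?thesis unfolding hausdorff_dist_def using 1 2 by simp
qed


lemma A_01: "a \<in> A_set c \<Longrightarrow> \<forall>j. a j \<in> {0, 1}"
  unfolding A_set_def by blast

lemma numeric_final: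
  fixes p :: real and k :: nat
  assumes p: "1.99 \<le> p" "p < 2" and k: "k \<ge> 9"
  shows "2 * (1 / p ^ (2 * k + 6)) / (1.98 - 1)^2 + 1 / (1.98 ^ (2 * k + 4 + k) * (1.98 - 1))
         < 1 / p ^ (2 * k + 4)"
proof -
  define P where "P = p ^ (2 * k + 4)"
  define R where "R = (1.98::real) ^ (2 * k + 4 + k)"
  define X where "X = (4::real) ^ k"
  have P0: "P > 0" unfolding P_def using p by simp
  have X0: "X > 0" unfolding X_def by simp
  have e6: "2 * k + 6 = 2 + (2 * k + 4)" by simp
  have d: "1 / p ^ (2 * k + 6) = 1 / (p^2 * P)" unfolding P_def e6 power_add ..
  have p2: "p^2 \<ge> 1.99^2" using p by (intro power_mono) auto
  have p2': "p^2 \<ge> 3.96" using p2 by (simp add: power_divide)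
  have "2 / ((1.98 - 1)^2 * p^2) \<le> (0.53::real)"
    using p2' by (simp add: divide_le_eq power_divide)
  then have t1: "2 * (1 / p ^ (2 * k + 6)) / (1.98 - 1)^2 \<le> 0.53 / P"
    unfolding d using P0 p by (simp add: field_simps)
  have PX: "P \<le> 16 * X"
  proof -
    have "P \<le> 2 ^ (2 * k + 4)" unfolding P_def using p by (intro power_mono) auto
    also have "(2::real) ^ (2 * k + 4) = 16 * X" unfolding X_def
      by (simp add: power_add power_mult)
    finally show ?thesis .
  qed
  have RX: "R \<ge> 57 * X"
  proof -
    have eR: "R = 1.98 ^ 4 * ((1.98::real) ^ 3) ^ k" unfolding R_def
      by (simp add: power_add power_mult[symmetric] algebra_simps)
    have "((1.98::real) ^ 3) ^ k \<ge> (4 * 1.94) ^ k" by (intro power_mono) (auto simp: power_divide)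
    also have "(4 * 1.94::real) ^ k = X * 1.94 ^ k" unfolding X_def by (rule power_mult_distrib)
    finally have a: "((1.98::real) ^ 3) ^ k \<ge> X * 1.94 ^ k" .
    have "(1.94::real) ^ k \<ge> 1.94 ^ 2" using k by (intro power_increasing) auto
    then have "X * 1.94 ^ k \<ge> X * 1.94 ^ 2" using X0 by (intro mult_left_mono) auto
    with a have "((1.98::real) ^ 3) ^ k \<ge> X * 1.94 ^ 2" by linarith
    then have "R \<ge> 1.98 ^ 4 * (X * 1.94 ^ 2)" unfolding eR by (intro mult_left_mono) auto
    moreover have "(1.98::real)^4 * (X * 1.94^2) = ((1.98::real)^4 * 1.94^2) * X" by simp
    moreover have "(57::real) \<le> (1.98::real)^4 * 1.94^2" by (simp add: power_divide)
    ultimately show ?thesis using X0 mult_right_mono[of 57 "(1.98::real)^4 * 1.94^2" X] by linarith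
  qed
  have t2: "1 / (R * (1.98 - 1)) \<le> 1 / (P / 0.3)"
    using P0 PX RX X0 by (intro frac_le) auto
  have t2': "1 / (P / 0.3) = 0.3 / P" by simp
  have "0.53 / P + 0.3 / P < 1 / P" using P0 by (simp add: field_simps)
  then show ?thesis unfolding R_def[symmetric] P_def[symmetric]
    using add_mono[OF t1 t2[unfolded t2']] by (rule le_less_trans[rotated])
qed

theorem lemma4p8:
  fixes k :: nat and q :: real and c :: "nat \<Rightarrow> int"
  assumes "k \<ge> 9"
    and "\<bar>q - qk k\<bar> < 1 / (qk k) ^ (2 * k + 6)"
    and "c \<in> seqs_W2 k"
    and "pi_q q c = 1"
  shows "hausdorff_dist (g_qk q k ` pi_q q ` A_set c)
           (g_qk (qk k) k ` pi_q (qk k) ` A_set (ones_then_zeros k))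
         < 1 / (qk k) ^ (2 * k + 4)"
proof -
  define p where "p = qk k"
  have p: "1.99 \<le> p" "p < 2" using qk_bounds[OF assms(1)] unfolding p_def by auto
  define d where "d = 1 / p ^ (2 * k + 6)"
  define N where "N = 2 * k + 4"
  define D where "D = 2 * d / (1.98 - 1)^2 + 1 / (1.98 ^ (N + k) * (1.98 - 1))"
  have qp: "\<bar>q - p\<bar> \<le> d" "\<bar>p - q\<bar> \<le> d" using assms(2) unfolding p_def d_def by auto
  have "p ^ 7 \<le> p ^ (2 * k + 6)" using p assms(1) by (intro power_increasing) auto
  moreover have "(1.99::real) ^ 7 \<le> p ^ 7" using p by (intro power_mono) auto
  moreover have "(100::real) \<le> 1.99 ^ 7" by (simp add: power_divide)
  ultimately have "100 \<le> p ^ (2 * k + 6)" by linarith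
  then have "d \<le> 1 / 100" unfolding d_def by (intro divide_left_mono) auto
  then have q198: "1.98 \<le> q" using qp p by (simp add: abs_le_iff; linarith)
  have agree: "\<forall>i<N. c i = ones_then_zeros k i" "\<forall>i<N. ones_then_zeros k i = c i"
    using assms(3) unfolding seqs_W2_def ones_then_zeros_def N_def by auto
  let ?A = "g_qk q k ` pi_q q ` A_set c"
  let ?B = "g_qk p k ` pi_q p ` A_set (ones_then_zeros k)"
  have ne: "?A \<noteq> {}" "?B \<noteq> {}" using a0_in by blast+
  have AB: "\<forall>z\<in>?A. \<exists>w\<in>?B. dist z w \<le> D"
  proof
    fix z assume "z \<in> ?A"
    then obtain a where a: "a \<in> A_set c" and z: "z = g_qk q k (pi_q q a)" by blast
    define b where "b = (\<lambda>j. if j < N then a j else a0 (ones_then_zeros k) j)"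
    have b: "b \<in> A_set (ones_then_zeros k)" unfolding b_def by (rule splice_in[OF a agree(1)])
    have "\<bar>g_qk q k (pi_q q a) - g_qk p k (pi_q p b)\<bar> \<le> D" unfolding D_def
      by (rule core[OF _ q198 p(1)[THEN order_trans[rotated], of "1.98"] qp(1) A_01[OF a] A_01[OF b]])
         (auto simp: b_def)
    then show "\<exists>w\<in>?B. dist z w \<le> D" using b z by (auto simp: dist_real_def)
  qed
  have BA: "\<forall>w\<in>?B. \<exists>z\<in>?A. dist w z \<le> D"
  proof
    fix w assume "w \<in> ?B"
    then obtain b where b: "b \<in> A_set (ones_then_zeros k)" and w: "w = g_qk p k (pi_q p b)" by blast
    define a where "a = (\<lambda>j. if j < N then b j else a0 c j)"
    have a: "a \<in> A_set c" unfolding a_def by (rule splice_in[OF b agree(2)])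
    have "\<bar>g_qk p k (pi_q p b) - g_qk q k (pi_q q a)\<bar> \<le> D" unfolding D_def
      by (rule core[OF _ p(1)[THEN order_trans[rotated], of "1.98"] q198 qp(2) A_01[OF b] A_01[OF a]])
         (auto simp: a_def)
    then show "\<exists>z\<in>?A. dist w z \<le> D" using a w by (auto simp: dist_real_def)
  qed
  have "hausdorff_dist ?A ?B \<le> D" by (rule hd_le[OF ne AB BA])
  also have "D < 1 / p ^ (2 * k + 4)" unfolding D_def d_def N_def
    by (rule numeric_final[OF p assms(1)])
  finally show ?thesis unfolding p_def .
qed

end
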